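(* Let $\mathcal{L}=(n,\mathcal{M},\mathcal{C})$ be a simple linearization. If $G(D(\mathcal{L}))$ is acyclic, then the system $0\le y_m\le1$ ($m\in\mathcal{M}$), $y_{\bigcup c}\le y_m$ ($c\in\mathcal{C}$, $m\in c$), $\sum_{m\in c}y_m\le y_{\bigcup c}+|c|-1$ ($c\in\mathcal{C}$) is totally dual integral.
   Context: $[n]=\{1,\dots,n\}$; a monomial is a nonempty subset of $[n]$; $\mathcal{S}=\{\{i\}:i\in[n]\}$. A linearization is a triple $\mathcal{L}=(n,\mathcal{M},\mathcal{C})$, where $\mathcal{M}$ is a set of monomials with $\mathcal{S}\subseteq\mathcal{M}$ and $\mathcal{C}$ is a set of AND-constraints; each AND-constraint is a set $c\subseteq\mathcal{M}$ whose union $\bigcup c$ (resultant) lies in $\mathcal{M}$. $\mathcal{P}=\mathcal{M}\setminus\mathcal{S}$. Linearizations are consistent: each $m\in\mathcal{P}$ is the resultant of some $c$ with $|m'|<|m|$ for all $m'\in c$. $\mathcal{L}$ is simple if each proper monomial is the resultant of exactly one AND-constraint and $|\mathcal{C}|=|\mathcal{P}|$. $D(\mathcal{L})$ has node set $\mathcal{M}$ and, for each $c\in\mathcal{C}$, arcs from $\bigcup c$ to each $m\in c$; $G(D(\mathcal{L}))$ is its underlying undirected graph. Total dual integrality: for every integral objective with finite LP maximum, the dual has an integral optimal solution. *)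

theory Defs
  imports Complex_Main
begin

definition monomial :: "nat \<Rightarrow> nat set \<Rightarrow> bool" where
  "monomial n m \<longleftrightarrow> m \<noteq> {} \<and> m \<subseteq> {1..n}"

definition singletons :: "nat \<Rightarrow> nat set set" where
  "singletons n = {{i} | i. i \<in> {1..n}}"

definition proper_monomials :: "nat \<Rightarrow> nat set set \<Rightarrow> nat set set" where
  "proper_monomials n M = M - singletons n"

text \<open>An AND-constraint is a set c of monomials of M whose union (resultant) lies in M.\<close>
definition linearization :: "nat \<Rightarrow> nat set set \<Rightarrow> nat set set set \<Rightarrow> bool" where
  "linearization n M C \<longleftrightarrow>
     (\<forall>m\<in>M. monomial n m) \<and> singletons n \<subseteq> M \<and>
     (\<forall>c\<in>C. c \<subseteq> M \<and> \<Union>c \<in> M) \<and>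
     (\<forall>m\<in>proper_monomials n M. \<exists>c\<in>C. \<Union>c = m \<and> (\<forall>m'\<in>c. card m' < card m))"

definition simple_linearization :: "nat \<Rightarrow> nat set set \<Rightarrow> nat set set set \<Rightarrow> bool" where
  "simple_linearization n M C \<longleftrightarrow>
     linearization n M C \<and>
     (\<forall>m\<in>proper_monomials n M. \<exists>!c. c \<in> C \<and> \<Union>c = m) \<and>
     card C = card (proper_monomials n M)"

definition D_arcs :: "nat set set set \<Rightarrow> (nat set \<times> nat set) set" where
  "D_arcs C = {(\<Union>c, m) | c m. c \<in> C \<and> m \<in> c}"

definition G_edges :: "nat set set set \<Rightarrow> nat set set set" where
  "G_edges C = {{u, v} | u v. (u, v) \<in> D_arcs C}"

definition is_cycle :: "'a set \<Rightarrow> 'a set set \<Rightarrow> 'a list \<Rightarrow> bool" where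
  "is_cycle V E vs \<longleftrightarrow>
     length vs \<ge> 3 \<and> distinct vs \<and> set vs \<subseteq> V \<and>
     (\<forall>i < length vs. {vs ! i, vs ! ((i + 1) mod length vs)} \<in> E)"

definition acyclic_graph :: "'a set \<Rightarrow> 'a set set \<Rightarrow> bool" where
  "acyclic_graph V E \<longleftrightarrow> (\<nexists>vs. is_cycle V E vs)"

text \<open>Rows indexed by R, variables indexed by V.\<close>
definition primal_feasible ::
  "'r set \<Rightarrow> 'v set \<Rightarrow> ('r \<Rightarrow> 'v \<Rightarrow> real) \<Rightarrow> ('r \<Rightarrow> real) \<Rightarrow> ('v \<Rightarrow> real) \<Rightarrow> bool" where
  "primal_feasible R V A b y \<longleftrightarrow> (\<forall>r\<in>R. (\<Sum>v\<in>V. A r v * y v) \<le> b r)"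

definition lp_has_finite_max ::
  "'r set \<Rightarrow> 'v set \<Rightarrow> ('r \<Rightarrow> 'v \<Rightarrow> real) \<Rightarrow> ('r \<Rightarrow> real) \<Rightarrow> ('v \<Rightarrow> real) \<Rightarrow> bool" where
  "lp_has_finite_max R V A b w \<longleftrightarrow>
     (\<exists>y. primal_feasible R V A b y \<and>
          (\<forall>y'. primal_feasible R V A b y' \<longrightarrow> (\<Sum>v\<in>V. w v * y' v) \<le> (\<Sum>v\<in>V. w v * y v)))"

definition dual_feasible ::
  "'r set \<Rightarrow> 'v set \<Rightarrow> ('r \<Rightarrow> 'v \<Rightarrow> real) \<Rightarrow> ('v \<Rightarrow> real) \<Rightarrow> ('r \<Rightarrow> real) \<Rightarrow> bool" where
  "dual_feasible R V A w u \<longleftrightarrow>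
     (\<forall>r\<in>R. u r \<ge> 0) \<and> (\<forall>v\<in>V. (\<Sum>r\<in>R. u r * A r v) = w v)"

definition dual_optimal ::
  "'r set \<Rightarrow> 'v set \<Rightarrow> ('r \<Rightarrow> 'v \<Rightarrow> real) \<Rightarrow> ('r \<Rightarrow> real) \<Rightarrow> ('v \<Rightarrow> real) \<Rightarrow> ('r \<Rightarrow> real) \<Rightarrow> bool" where
  "dual_optimal R V A b w u \<longleftrightarrow>
     dual_feasible R V A w u \<and>
     (\<forall>u'. dual_feasible R V A w u' \<longrightarrow> (\<Sum>r\<in>R. b r * u r) \<le> (\<Sum>r\<in>R. b r * u' r))"

definition TDI ::
  "'r set \<Rightarrow> 'v set \<Rightarrow> ('r \<Rightarrow> 'v \<Rightarrow> real) \<Rightarrow> ('r \<Rightarrow> real) \<Rightarrow> bool" where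
  "TDI R V A b \<longleftrightarrow>
     (\<forall>w :: 'v \<Rightarrow> int. lp_has_finite_max R V A b (\<lambda>v. of_int (w v)) \<longrightarrow>
        (\<exists>u. dual_optimal R V A b (\<lambda>v. of_int (w v)) u \<and> (\<forall>r\<in>R. u r \<in> \<int>)))"

datatype row =
    Lower "nat set"                 \<comment> \<open>-y_m \<le> 0\<close>
  | Upper "nat set"                 \<comment> \<open>y_m \<le> 1\<close>
  | Link "nat set set" "nat set"    \<comment> \<open>y_{\<Union>c} - y_m \<le> 0\<close>
  | AndRow "nat set set"            \<comment> \<open>\<Sum>_{m\<in>c} y_m - y_{\<Union>c} \<le> |c| - 1\<close>

definition lin_rows :: "nat set set \<Rightarrow> nat set set set \<Rightarrow> row set" where
  "lin_rows M C = Lower ` M \<union> Upper ` M \<union> {Link c m | c m. c \<in> C \<and> m \<in> c} \<union> AndRow ` C"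

fun lin_A :: "row \<Rightarrow> nat set \<Rightarrow> real" where
  "lin_A (Lower m) v = (if v = m then -1 else 0)"
| "lin_A (Upper m) v = (if v = m then 1 else 0)"
| "lin_A (Link c m) v = (if v = \<Union>c then 1 else 0) - (if v = m then 1 else 0)"
| "lin_A (AndRow c) v = (if v \<in> c then 1 else 0) - (if v = \<Union>c then 1 else 0)"

fun lin_b :: "row \<Rightarrow> real" where
  "lin_b (Lower m) = 0"
| "lin_b (Upper m) = 1"
| "lin_b (Link c m) = 0"
| "lin_b (AndRow c) = real (card c) - 1"

end

theory Submission
  imports Defs
begin


definition star :: "nat set set \<Rightarrow> nat set set" where
  "star c = insert (\<Union>c) c"

definition rows_of :: "nat set set \<Rightarrow> nat set set set \<Rightarrow> row set" where
  "rows_of V K = Lower ` V \<union> Upper ` V \<union> {Link c m | c m. c \<in> K \<and> m \<in> c} \<union> AndRow ` K"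

definition wfs :: "nat set set \<Rightarrow> nat set set set \<Rightarrow> bool" where
  "wfs V K \<longleftrightarrow> finite V \<and> finite K \<and> (\<forall>c\<in>K. finite c \<and> c \<subseteq> V \<and> \<Union>c \<in> V)"

definition feas :: "nat set set \<Rightarrow> nat set set set \<Rightarrow> (nat set \<Rightarrow> int) \<Rightarrow> bool" where
  "feas V K y \<longleftrightarrow> (\<forall>v\<in>V. 0 \<le> y v \<and> y v \<le> 1) \<and> (\<forall>c\<in>K. \<forall>m\<in>c. y (\<Union>c) \<le> y m) \<and>
     (\<forall>c\<in>K. (\<Sum>m\<in>c. y m) - y (\<Union>c) \<le> int (card c) - 1)"

definition tK :: "nat set set set \<Rightarrow> (row \<Rightarrow> int) \<Rightarrow> nat set \<Rightarrow> int" where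
  "tK K u x = (\<Sum>c\<in>K. (if x = \<Union>c then (\<Sum>m\<in>c. u (Link c m)) - u (AndRow c) else 0)
        + (if x \<in> c then u (AndRow c) - u (Link c x) else 0))"

definition dfeas :: "nat set set \<Rightarrow> nat set set set \<Rightarrow> (nat set \<Rightarrow> int) \<Rightarrow> (row \<Rightarrow> int) \<Rightarrow> bool" where
  "dfeas V K w u \<longleftrightarrow> (\<forall>r. 0 \<le> u r) \<and> (\<forall>x\<in>V. u (Upper x) - u (Lower x) + tK K u x = w x)"

definition obj :: "nat set set \<Rightarrow> nat set set set \<Rightarrow> (row \<Rightarrow> int) \<Rightarrow> int" where
  "obj V K u = (\<Sum>v\<in>V. u (Upper v)) + (\<Sum>c\<in>K. (int (card c) - 1) * u (AndRow c))"

definition nice :: "nat set set \<Rightarrow> nat set set set \<Rightarrow> bool" where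
  "nice V K \<longleftrightarrow> (\<forall>w. \<exists>y u. (\<forall>v\<in>V. y v = 0 \<or> y v = 1) \<and> feas V K y \<and> dfeas V K w u
      \<and> (\<Sum>v\<in>V. w v * y v) = obj V K u)"

lemma rows_split:
  "rows_of V K = Lower ` V \<union> Upper ` V \<union> (\<lambda>(c,m). Link c m) ` Sigma K (\<lambda>c. c) \<union> AndRow ` K"
  unfolding rows_of_def by auto

lemma rows_finite: "wfs V K \<Longrightarrow> finite (rows_of V K)"
  unfolding rows_split wfs_def by (auto intro!: finite_imageI finite_SigmaI)

lemma sum_Sig:
  assumes "wfs V K"
  shows "(\<Sum>r\<in>(\<lambda>(c,m). Link c m) ` Sigma K (\<lambda>c. c). f r) = (\<Sum>c\<in>K. \<Sum>m\<in>c. f (Link c m))"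
proof -
  have "inj_on (\<lambda>(c,m). Link c m) (Sigma K (\<lambda>c. c))" by (auto simp: inj_on_def)
  then have "(\<Sum>r\<in>(\<lambda>(c,m). Link c m) ` Sigma K (\<lambda>c. c). f r) = (\<Sum>(c,m)\<in>Sigma K (\<lambda>c. c). f (Link c m))"
    by (subst sum.reindex[OF \<open>inj_on _ _\<close>]) (auto intro!: sum.cong)
  also have "\<dots> = (\<Sum>c\<in>K. \<Sum>m\<in>c. f (Link c m))"
    using assms unfolding wfs_def by (subst sum.Sigma) auto
  finally show ?thesis .
qed

lemma sum_rows:
  assumes "wfs V K"
  shows "(\<Sum>r\<in>rows_of V K. f r) = (\<Sum>v\<in>V. f (Lower v)) + (\<Sum>v\<in>V. f (Upper v))
     + (\<Sum>c\<in>K. \<Sum>m\<in>c. f (Link c m)) + (\<Sum>c\<in>K. f (AndRow c))"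
proof -
  have fin: "finite V" "finite K" "finite (Sigma K (\<lambda>c. c))" using assms unfolding wfs_def by auto
  have "(\<Sum>r\<in>rows_of V K. f r) = (\<Sum>r\<in>Lower ` V. f r) + (\<Sum>r\<in>Upper ` V. f r)
     + (\<Sum>r\<in>(\<lambda>(c,m). Link c m) ` Sigma K (\<lambda>c. c). f r) + (\<Sum>r\<in>AndRow ` K. f r)"
    unfolding rows_split using fin
    by (subst sum.union_disjoint, auto)+
  also have "\<dots> = (\<Sum>v\<in>V. f (Lower v)) + (\<Sum>v\<in>V. f (Upper v))
     + (\<Sum>c\<in>K. \<Sum>m\<in>c. f (Link c m)) + (\<Sum>c\<in>K. f (AndRow c))"
    by (subst sum_Sig[OF assms]) (simp add: sum.reindex inj_on_def)
  finally show ?thesis .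
qed


lemma sum_delta_mult: "finite V \<Longrightarrow> (\<Sum>v\<in>V. g v * (if x = v then a else 0)) = (if x \<in> V then g x * (a::real) else 0)"
proof -
  assume "finite V"
  have "(\<lambda>v. g v * (if x = v then a else 0)) = (\<lambda>v. if x = v then g x * a else 0)" by auto
  show ?thesis unfolding \<open>(\<lambda>v. _) = _\<close> using \<open>finite V\<close> by (simp add: sum.delta)
qed

lemma rowsum:
  assumes "wfs V K" "x \<in> V"
  shows "(\<Sum>r\<in>rows_of V K. real_of_int (u r) * lin_A r x) = real_of_int (u (Upper x) - u (Lower x) + tK K u x)"
proof -
  have fin: "finite V" "finite K" "\<And>c. c \<in> K \<Longrightarrow> finite c" using assms unfolding wfs_def by auto
  have L: "(\<Sum>v\<in>V. real_of_int (u (Lower v)) * lin_A (Lower v) x) = - u (Lower x)"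
    using sum_delta_mult[OF fin(1), of "\<lambda>v. real_of_int (u (Lower v))" x "-1"] assms(2) by simp
  have U: "(\<Sum>v\<in>V. real_of_int (u (Upper v)) * lin_A (Upper v) x) = u (Upper x)"
    using sum_delta_mult[OF fin(1), of "\<lambda>v. real_of_int (u (Upper v))" x "1"] assms(2) by simp
  have LK: "(\<Sum>c\<in>K. \<Sum>m\<in>c. real_of_int(u(Link c m)) * lin_A (Link c m) x)
      + (\<Sum>c\<in>K. real_of_int (u (AndRow c)) * lin_A (AndRow c) x) = real_of_int (tK K u x)"
    unfolding tK_def of_int_sum sum.distrib[symmetric]
  proof (rule sum.cong[OF refl])
    fix c assume c: "c \<in> K"
    have a: "(\<Sum>m\<in>c. real_of_int(u(Link c m)) * lin_A (Link c m) x)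
       = (if x = \<Union>c then (\<Sum>m\<in>c. real_of_int(u(Link c m))) else 0) - (if x \<in> c then real_of_int (u (Link c x)) else 0)"
      using sum_delta_mult[OF fin(3)[OF c], of "\<lambda>m. real_of_int (u (Link c m))" x 1]
      by (simp add: right_diff_distrib sum_subtractf sum_distrib_left[symmetric] mult.commute)
    show "(\<Sum>m\<in>c. real_of_int(u(Link c m)) * lin_A (Link c m) x) + real_of_int (u (AndRow c)) * lin_A (AndRow c) x
       = real_of_int ((if x = \<Union>c then (\<Sum>m\<in>c. u (Link c m)) - u (AndRow c) else 0)
        + (if x \<in> c then u (AndRow c) - u (Link c x) else 0))"
      unfolding a by (simp add: of_int_sum)
  qed
  show ?thesis
    unfolding sum_rows[OF assms(1)] using L U LK by simp
qed

lemma objsum: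
  assumes "wfs V K"
  shows "(\<Sum>r\<in>rows_of V K. lin_b r * real_of_int (u r)) = real_of_int (obj V K u)"
  unfolding sum_rows[OF assms] obj_def by (simp add: of_int_sum)

lemma primal_bridge:
  assumes "wfs V K" "feas V K y"
  shows "primal_feasible (rows_of V K) V lin_A lin_b (\<lambda>v. real_of_int (y v))"
  unfolding primal_feasible_def
proof
  fix r assume r: "r \<in> rows_of V K"
  have fin: "finite V" using assms unfolding wfs_def by auto
  have sd: "\<And>g a x. x \<in> V \<Longrightarrow> (\<Sum>v\<in>V. (if v = x then a else 0) * g v) = (a::real) * g x"
    using fin by (simp add: if_distrib[of "\<lambda>t. t * _"] sum.delta' cong: if_cong)
  show "(\<Sum>v\<in>V. lin_A r v * real_of_int (y v)) \<le> lin_b r"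
  proof (cases r)
    case (Lower m)
    then have "m \<in> V" using r unfolding rows_of_def by auto
    then show ?thesis using Lower assms(2) sd[of m "-1"] unfolding feas_def by simp
  next
    case (Upper m)
    then have "m \<in> V" using r unfolding rows_of_def by auto
    then show ?thesis using Upper assms(2) sd[of m "1"] unfolding feas_def by simp
  next
    case (Link c m)
    then have cm: "c \<in> K" "m \<in> c" using r unfolding rows_of_def by auto
    then have "m \<in> V" "\<Union>c \<in> V" using assms(1) unfolding wfs_def by auto
    then have "(\<Sum>v\<in>V. lin_A r v * real_of_int (y v)) = y (\<Union>c) - y m"
      using Link sd[of "\<Union>c" 1 "\<lambda>v. real_of_int (y v)"] sd[of m 1 "\<lambda>v. real_of_int (y v)"]
      by (simp add: left_diff_distrib sum_subtractf)
    then show ?thesis using Link cm assms(2) unfolding feas_def by simp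
  next
    case (AndRow c)
    then have c: "c \<in> K" using r unfolding rows_of_def by auto
    then have cV: "c \<subseteq> V" "\<Union>c \<in> V" using assms(1) unfolding wfs_def by auto
    have s1: "(\<Sum>v\<in>V. (if v \<in> c then 1 else 0) * real_of_int (y v)) = (\<Sum>v\<in>c. real_of_int (y v))"
      using fin cV(1) by (simp add: if_distrib[of "\<lambda>t. t * _"] sum.inter_restrict[symmetric] Int_absorb1 cong: if_cong)
    have "(\<Sum>v\<in>V. lin_A r v * real_of_int (y v)) = (\<Sum>v\<in>c. real_of_int (y v)) - y (\<Union>c)"
      using AndRow sd[of "\<Union>c" 1 "\<lambda>v. real_of_int (y v)"] s1 cV
      by (simp add: left_diff_distrib sum_subtractf)
    moreover have "(\<Sum>m\<in>c. y m) - y (\<Union>c) \<le> int (card c) - 1" using c assms(2) unfolding feas_def by auto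
    then have "(\<Sum>v\<in>c. real_of_int (y v)) - y (\<Union>c) \<le> real (card c) - 1"
      by (metis (mono_tags, lifting) of_int_diff of_int_le_iff of_int_of_nat_eq of_int_sum of_int_1)
    ultimately show ?thesis using AndRow by simp
  qed
qed

lemma dual_bridge:
  assumes "wfs V K" "dfeas V K w u"
  shows "dual_feasible (rows_of V K) V lin_A (\<lambda>v. real_of_int (w v)) (\<lambda>r. real_of_int (u r))"
  unfolding dual_feasible_def
  using assms rowsum[OF assms(1)] unfolding dfeas_def by auto

lemma weak_duality:
  assumes "finite R" "finite V" "primal_feasible R V A b y" "dual_feasible R V A w u"
  shows "(\<Sum>v\<in>V. w v * y v) \<le> (\<Sum>r\<in>R. b r * u r)"
proof -
  have "(\<Sum>v\<in>V. w v * y v) = (\<Sum>v\<in>V. (\<Sum>r\<in>R. u r * A r v) * y v)"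
    using assms(4) unfolding dual_feasible_def by auto
  also have "\<dots> = (\<Sum>r\<in>R. u r * (\<Sum>v\<in>V. A r v * y v))"
    by (simp add: sum_distrib_left sum_distrib_right sum.swap[of _ V R] mult.assoc)
  also have "\<dots> \<le> (\<Sum>r\<in>R. u r * b r)"
    using assms(3,4) unfolding primal_feasible_def dual_feasible_def
    by (intro sum_mono mult_left_mono) auto
  finally show ?thesis by (simp add: mult.commute)
qed

lemma int_weak_duality:
  assumes "wfs V K" "feas V K y" "dfeas V K w u"
  shows "(\<Sum>v\<in>V. w v * y v) \<le> obj V K u"
proof -
  have "real_of_int (\<Sum>v\<in>V. w v * y v) = (\<Sum>v\<in>V. real_of_int (w v) * real_of_int (y v))" by simp
  also have "\<dots> \<le> (\<Sum>r\<in>rows_of V K. lin_b r * real_of_int (u r))"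
    by (rule weak_duality[OF rows_finite[OF assms(1)] _ primal_bridge[OF assms(1,2)] dual_bridge[OF assms(1,3)]])
       (use assms(1) in \<open>auto simp: wfs_def\<close>)
  also have "\<dots> = real_of_int (obj V K u)" by (rule objsum[OF assms(1)])
  finally show ?thesis by linarith
qed

lemma nice_TDI:
  assumes "wfs V K" "nice V K"
  shows "TDI (rows_of V K) V lin_A lin_b"
  unfolding TDI_def
proof (intro allI impI)
  fix w :: "nat set \<Rightarrow> int"
  obtain y u where y01: "\<forall>v\<in>V. y v = 0 \<or> y v = 1" and fe: "feas V K y" and df: "dfeas V K w u"
    and eq: "(\<Sum>v\<in>V. w v * y v) = obj V K u"
    using assms(2) unfolding nice_def by blast
  have finV: "finite V" using assms(1) unfolding wfs_def by auto
  show "\<exists>u. dual_optimal (rows_of V K) V lin_A lin_b (\<lambda>v. real_of_int (w v)) u \<and> (\<forall>r\<in>rows_of V K. u r \<in> \<int>)"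
  proof (intro exI conjI ballI)
    show "dual_optimal (rows_of V K) V lin_A lin_b (\<lambda>v. real_of_int (w v)) (\<lambda>r. real_of_int (u r))"
      unfolding dual_optimal_def
    proof (intro conjI allI impI)
      show "dual_feasible (rows_of V K) V lin_A (\<lambda>v. real_of_int (w v)) (\<lambda>r. real_of_int (u r))"
        by (rule dual_bridge[OF assms(1) df])
      fix u' assume u': "dual_feasible (rows_of V K) V lin_A (\<lambda>v. real_of_int (w v)) u'"
      have "(\<Sum>r\<in>rows_of V K. lin_b r * real_of_int (u r)) = real_of_int (obj V K u)" by (rule objsum[OF assms(1)])
      also have "\<dots> = (\<Sum>v\<in>V. real_of_int (w v) * real_of_int (y v))" unfolding eq[symmetric] by simp
      also have "\<dots> \<le> (\<Sum>r\<in>rows_of V K. lin_b r * u' r)"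
        by (rule weak_duality[OF rows_finite[OF assms(1)] finV primal_bridge[OF assms(1) fe] u'])
      finally show "(\<Sum>r\<in>rows_of V K. lin_b r * real_of_int (u r)) \<le> (\<Sum>r\<in>rows_of V K. lin_b r * u' r)" .
    qed
  next
    fix r show "real_of_int (u r) \<in> \<int>" by simp
  qed
qed




lemma base_nice:
  assumes "finite V"
  shows "nice V {}"
  unfolding nice_def
proof
  fix w :: "nat set \<Rightarrow> int"
  define y where "y = (\<lambda>x. if w x > 0 then 1 else (0::int))"
  define u where "u = (\<lambda>r. case r of Upper x \<Rightarrow> max (w x) 0 | Lower x \<Rightarrow> max (- w x) 0 | _ \<Rightarrow> (0::int))"
  have "(\<forall>v\<in>V. y v = 0 \<or> y v = 1)" unfolding y_def by auto
  moreover have "feas V {} y" unfolding feas_def y_def by auto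
  moreover have "dfeas V {} w u" unfolding dfeas_def tK_def u_def
    by (auto split: row.split)
  moreover have "(\<Sum>v\<in>V. w v * y v) = obj V {} u" unfolding obj_def u_def y_def
    by (auto intro!: sum.cong)
  ultimately show "\<exists>y u. (\<forall>v\<in>V. y v = 0 \<or> y v = 1) \<and> feas V {} y \<and> dfeas V {} w u \<and> (\<Sum>v\<in>V. w v * y v) = obj V {} u"
    by blast
qed

definition mk :: "nat set set \<Rightarrow> (nat set \<Rightarrow> int) \<Rightarrow> (nat set \<Rightarrow> int) \<Rightarrow> (nat set \<Rightarrow> int) \<Rightarrow> int \<Rightarrow> row \<Rightarrow> int" where
  "mk c U L Lk a r = (case r of Upper x \<Rightarrow> U x | Lower x \<Rightarrow> L x | Link d m \<Rightarrow> (if d = c then Lk m else 0)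
     | AndRow d \<Rightarrow> (if d = c then a else 0))"

lemma star_reduce:
  assumes fc: "finite c" and pc: "\<Union>c \<notin> c"
    and y01: "y (\<Union>c) = 0 \<or> y (\<Union>c) = 1" "\<forall>m\<in>c. y m = 0 \<or> y m = 1"
    and lk: "\<forall>m\<in>c. y (\<Union>c) \<le> y m"
    and ar: "(\<Sum>m\<in>c. y m) - y (\<Union>c) \<le> int (card c) - 1"
    and nn: "\<forall>x. 0 \<le> U x" "\<forall>x. 0 \<le> L x" "\<forall>x. 0 \<le> Lk x" "0 \<le> a"
    and peq: "U (\<Union>c) - L (\<Union>c) + (\<Sum>m\<in>c. Lk m) - a = w (\<Union>c)"
    and meq: "\<forall>m\<in>c. U m - L m + a - Lk m = w m"
    and val: "w (\<Union>c) * y (\<Union>c) + (\<Sum>m\<in>c. w m * y m) = U (\<Union>c) + (\<Sum>m\<in>c. U m) + (int (card c) - 1) * a"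
  shows "\<exists>y u. (\<forall>v\<in>star c. y v = 0 \<or> y v = 1) \<and> feas (star c) {c} y \<and> dfeas (star c) {c} w u
      \<and> (\<Sum>v\<in>star c. w v * y v) = obj (star c) {c} u"
proof (intro exI conjI)
  let ?u = "mk c U L Lk a"
  show "\<forall>v\<in>star c. y v = 0 \<or> y v = 1" using y01 unfolding star_def by auto
  show "feas (star c) {c} y" unfolding feas_def star_def using y01 lk ar by auto
  show "dfeas (star c) {c} w ?u" unfolding dfeas_def
  proof (intro conjI allI ballI)
    fix r show "0 \<le> ?u r" using nn unfolding mk_def by (auto split: row.split)
  next
    fix x assume x: "x \<in> star c"
    show "?u (Upper x) - ?u (Lower x) + tK {c} ?u x = w x"
    proof (cases "x = \<Union>c")
      case True
      then show ?thesis using peq pc unfolding tK_def mk_def by simp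
    next
      case False
      then have "x \<in> c" using x unfolding star_def by auto
      then have "U x - L x + a - Lk x = w x" using meq by auto
      then show ?thesis using False \<open>x \<in> c\<close> unfolding tK_def mk_def by simp
    qed
  qed
  show "(\<Sum>v\<in>star c. w v * y v) = obj (star c) {c} ?u"
    using val fc pc unfolding obj_def star_def mk_def by simp
qed

lemma distrib_int:
  fixes f :: "'a \<Rightarrow> int"
  assumes "finite S" "\<forall>x\<in>S. 0 \<le> f x" "0 \<le> t" "t \<le> (\<Sum>x\<in>S. f x)"
  shows "\<exists>g. (\<forall>x\<in>S. 0 \<le> g x \<and> g x \<le> f x) \<and> (\<Sum>x\<in>S. g x) = t"
  using assms
proof (induction S arbitrary: t rule: finite_induct)
  case empty
  then show ?case by auto
next
  case (insert x S)
  define s where "s = min t (f x)"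
  have sn: "0 \<le> (\<Sum>x\<in>S. f x)" using insert.prems(1) by (simp add: sum_nonneg)
  have st: "t \<le> f x + (\<Sum>x\<in>S. f x)" using insert.prems(3) insert.hyps by simp
  have h1: "0 \<le> t - s" "t - s \<le> (\<Sum>x\<in>S. f x)"
    using sn st unfolding s_def by auto
  have h0: "\<forall>x\<in>S. 0 \<le> f x" using insert.prems(1) by simp
  obtain g where g: "\<forall>x\<in>S. 0 \<le> g x \<and> g x \<le> f x" "(\<Sum>x\<in>S. g x) = t - s"
    using insert.IH[OF h0 h1] by blast
  have e: "(\<Sum>z\<in>S. (g(x := s)) z) = (\<Sum>z\<in>S. g z)" using insert.hyps by (intro sum.cong) auto
  have b: "\<forall>z\<in>insert x S. 0 \<le> (g(x := s)) z \<and> (g(x := s)) z \<le> f z"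
  proof
    fix z assume z: "z \<in> insert x S"
    show "0 \<le> (g(x := s)) z \<and> (g(x := s)) z \<le> f z"
    proof (cases "z = x")
      case True then show ?thesis using insert.prems unfolding s_def by simp
    next
      case False then show ?thesis using z g(1) by simp
    qed
  qed
  have "(\<Sum>z\<in>insert x S. (g(x := s)) z) = s + (\<Sum>z\<in>S. g z)"
    using insert.hyps e by simp
  then have "(\<Sum>z\<in>insert x S. (g(x := s)) z) = t" using g(2) by simp
  then show ?case using b by blast
qed

lemma sum01_le:
  fixes y :: "'a \<Rightarrow> int"
  assumes "finite c" "m0 \<in> c" "y m0 = 0" "\<forall>m\<in>c. y m \<le> 1"
  shows "(\<Sum>m\<in>c. y m) \<le> int (card c) - 1"
proof -
  have "(\<Sum>m\<in>c. y m) = y m0 + (\<Sum>m\<in>c - {m0}. y m)" using assms(1,2) by (simp add: sum.remove)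
  also have "(\<Sum>m\<in>c - {m0}. y m) \<le> (\<Sum>m\<in>c - {m0}. 1)" using assms(4) by (intro sum_mono) simp
  also have "(\<Sum>m\<in>c - {m0}. (1::int)) = int (card c) - 1"
  proof -
    have "card c > 0" using assms(1,2) card_gt_0_iff by blast
    then show ?thesis using assms(1,2) by (simp add: card_Diff_singleton of_nat_diff)
  qed
  finally show ?thesis using assms(3) by simp
qed

lemma sum_pos_neg: "(\<Sum>m\<in>c. (w m::int)) = (\<Sum>m\<in>c. max (w m) 0) - (\<Sum>m\<in>c. max (- w m) 0)"
  by (simp add: sum_subtractf[symmetric]) (rule sum.cong, auto)

lemma star_case1:
  assumes fc: "finite c" and pc: "\<Union>c \<notin> c"
    and h: "w (\<Union>c) \<ge> (\<Sum>m\<in>c. max (- w m) 0)"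
  shows "\<exists>y u. (\<forall>v\<in>star c. y v = 0 \<or> y v = 1) \<and> feas (star c) {c} y \<and> dfeas (star c) {c} w u
      \<and> (\<Sum>v\<in>star c. w v * y v) = obj (star c) {c} u"
proof -
  define Sm where "Sm = (\<Sum>m\<in>c. max (- w m) 0)"
  define U where "U = (\<lambda>x. if x = \<Union>c then w (\<Union>c) - Sm else max (w x) 0)"
  have sU: "(\<Sum>m\<in>c. U m) = (\<Sum>m\<in>c. max (w m) 0)" using pc unfolding U_def by (intro sum.cong) auto
  show ?thesis
  proof (rule star_reduce[OF fc pc, of "\<lambda>_. 1" U "\<lambda>_. 0" "\<lambda>m. max (- w m) 0" 0])
    show "\<forall>x. 0 \<le> U x" using h unfolding U_def Sm_def by auto
    show "U (\<Union>c) - 0 + (\<Sum>m\<in>c. max (- w m) 0) - 0 = w (\<Union>c)" unfolding U_def Sm_def by simp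
    show "\<forall>m\<in>c. U m - 0 + 0 - max (- w m) 0 = w m" using pc unfolding U_def by auto
    show "w (\<Union>c) * 1 + (\<Sum>m\<in>c. w m * 1) = U (\<Union>c) + (\<Sum>m\<in>c. U m) + (int (card c) - 1) * 0"
      unfolding sU using sum_pos_neg[of w c] unfolding U_def Sm_def by simp
  qed auto
qed

lemma star_case2:
  assumes fc: "finite c" and pc: "\<Union>c \<notin> c" and m0: "m0 \<in> c" "w m0 \<le> 0"
    and h: "w (\<Union>c) < (\<Sum>m\<in>c. max (- w m) 0)"
  shows "\<exists>y u. (\<forall>v\<in>star c. y v = 0 \<or> y v = 1) \<and> feas (star c) {c} y \<and> dfeas (star c) {c} w u
      \<and> (\<Sum>v\<in>star c. w v * y v) = obj (star c) {c} u"
proof -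
  obtain g where g: "\<forall>x\<in>c. 0 \<le> g x \<and> g x \<le> max (- w x) 0" "(\<Sum>x\<in>c. g x) = max (w (\<Union>c)) 0"
    using distrib_int[OF fc, of "\<lambda>m. max (- w m) 0" "max (w (\<Union>c)) 0"] h
      sum_nonneg[of c "\<lambda>m. max (- w m) 0"] by auto
  define y where "y = (\<lambda>x. if x = \<Union>c then 0 else if w x > 0 then 1 else (0::int))"
  define U where "U = (\<lambda>x. if x = \<Union>c then 0 else max (w x) 0)"
  define L where "L = (\<lambda>x. if x = \<Union>c then max (- w x) 0 else if x \<in> c then max (- w x) 0 - g x else 0)"
  define Lk where "Lk = (\<lambda>x. if x \<in> c then g x else 0)"
  have sU: "(\<Sum>m\<in>c. U m) = (\<Sum>m\<in>c. max (w m) 0)" using pc unfolding U_def by (intro sum.cong) auto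
  have sy: "(\<Sum>m\<in>c. w m * y m) = (\<Sum>m\<in>c. max (w m) 0)" using pc unfolding y_def by (intro sum.cong) auto
  have sLk: "(\<Sum>m\<in>c. Lk m) = max (w (\<Union>c)) 0" using g(2) unfolding Lk_def by simp
  show ?thesis
  proof (rule star_reduce[OF fc pc, of y U L Lk 0])
    show "\<forall>x. 0 \<le> L x" using g(1) unfolding L_def by auto
    show "\<forall>x. 0 \<le> Lk x" using g(1) unfolding Lk_def by auto
    show "\<forall>x. 0 \<le> U x" unfolding U_def by auto
    show "U (\<Union>c) - L (\<Union>c) + (\<Sum>m\<in>c. Lk m) - 0 = w (\<Union>c)" unfolding sLk unfolding U_def L_def by simp
    show "\<forall>m\<in>c. U m - L m + 0 - Lk m = w m" using pc unfolding U_def L_def Lk_def by auto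
    show "w (\<Union>c) * y (\<Union>c) + (\<Sum>m\<in>c. w m * y m) = U (\<Union>c) + (\<Sum>m\<in>c. U m) + (int (card c) - 1) * 0"
      unfolding sU sy unfolding U_def y_def by simp
    have "(\<Sum>m\<in>c. y m) \<le> int (card c) - 1"
      by (rule sum01_le[OF fc m0(1)]) (use m0 pc in \<open>auto simp: y_def\<close>)
    then show "(\<Sum>m\<in>c. y m) - y (\<Union>c) \<le> int (card c) - 1" unfolding y_def by simp
  qed (auto simp: y_def)
qed

lemma star_case3:
  assumes fc: "finite c" and pc: "\<Union>c \<notin> c" and ne: "c \<noteq> {}" and pos: "\<forall>m\<in>c. w m > 0"
    and h: "w (\<Union>c) < 0"
  shows "\<exists>y u. (\<forall>v\<in>star c. y v = 0 \<or> y v = 1) \<and> feas (star c) {c} y \<and> dfeas (star c) {c} w u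
      \<and> (\<Sum>v\<in>star c. w v * y v) = obj (star c) {c} u"
proof -
  define \<mu> where "\<mu> = Min (w ` c)"
  have "\<mu> \<in> w ` c" unfolding \<mu>_def using fc ne by (intro Min_in) auto
  then obtain m0 where m0: "m0 \<in> c" "w m0 = \<mu>" by auto
  have mle: "\<forall>m\<in>c. \<mu> \<le> w m" using fc unfolding \<mu>_def by auto
  have mpos: "\<mu> > 0" using m0 pos by auto
  define a where "a = min \<mu> (- w (\<Union>c))"
  define U where "U = (\<lambda>x. if x = \<Union>c then 0 else if x \<in> c then w x - a else 0)"
  define L where "L = (\<lambda>x. if x = \<Union>c then - w x - a else 0)"
  have "(\<Sum>m\<in>c. U m) = (\<Sum>m\<in>c. w m - a)" using pc unfolding U_def by (intro sum.cong) auto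
  then have sU: "(\<Sum>m\<in>c. U m) = (\<Sum>m\<in>c. w m) - int (card c) * a" by (simp add: sum_subtractf)
  have common: "\<forall>x. 0 \<le> U x" "\<forall>x. 0 \<le> L x" "0 \<le> a"
    "U (\<Union>c) - L (\<Union>c) + (\<Sum>m\<in>c. 0) - a = w (\<Union>c)"
    "\<forall>m\<in>c. U m - L m + a - 0 = w m"
    using mle mpos h pc unfolding U_def L_def a_def by auto
  show ?thesis
  proof (cases "w (\<Union>c) \<ge> - \<mu>")
    case True
    then have aa: "a = - w (\<Union>c)" unfolding a_def by simp
    show ?thesis
    proof (rule star_reduce[OF fc pc, of "\<lambda>_. 1" U L "\<lambda>_. 0" a])
      show "w (\<Union>c) * 1 + (\<Sum>m\<in>c. w m * 1) = U (\<Union>c) + (\<Sum>m\<in>c. U m) + (int (card c) - 1) * a"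
        unfolding sU unfolding U_def aa by (simp add: algebra_simps)
    qed (use common in auto)
  next
    case False
    then have aa: "a = \<mu>" unfolding a_def by simp
    define y where "y = (\<lambda>x. if x = \<Union>c \<or> x = m0 then 0 else (1::int))"
    have sy: "(\<Sum>m\<in>c. w m * y m) = (\<Sum>m\<in>c. w m) - \<mu>"
    proof -
      have "(\<Sum>m\<in>c. w m * y m) = w m0 * y m0 + (\<Sum>m\<in>c - {m0}. w m * y m)" using fc m0 by (simp add: sum.remove)
      also have "(\<Sum>m\<in>c - {m0}. w m * y m) = (\<Sum>m\<in>c - {m0}. w m)" using pc unfolding y_def by (intro sum.cong) auto
      also have "(\<Sum>m\<in>c. w m) = w m0 + (\<Sum>m\<in>c - {m0}. w m)" using fc m0 by (simp add: sum.remove)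
      ultimately show ?thesis using m0 unfolding y_def by simp
    qed
    show ?thesis
    proof (rule star_reduce[OF fc pc, of y U L "\<lambda>_. 0" a])
      show "w (\<Union>c) * y (\<Union>c) + (\<Sum>m\<in>c. w m * y m) = U (\<Union>c) + (\<Sum>m\<in>c. U m) + (int (card c) - 1) * a"
        unfolding sU sy unfolding U_def aa y_def by (simp add: algebra_simps)
      have "(\<Sum>m\<in>c. y m) \<le> int (card c) - 1"
        by (rule sum01_le[OF fc m0(1)]) (use m0 pc in \<open>auto simp: y_def\<close>)
      then show "(\<Sum>m\<in>c. y m) - y (\<Union>c) \<le> int (card c) - 1" unfolding y_def by simp
    qed (use common in \<open>auto simp: y_def\<close>)
  qed
qed

lemma star_nice:
  assumes fc: "finite c" and pc: "\<Union>c \<notin> c" and ne: "c \<noteq> {}"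
  shows "nice (star c) {c}"
  unfolding nice_def
proof
  fix w :: "nat set \<Rightarrow> int"
  show "\<exists>y u. (\<forall>v\<in>star c. y v = 0 \<or> y v = 1) \<and> feas (star c) {c} y \<and> dfeas (star c) {c} w u
      \<and> (\<Sum>v\<in>star c. w v * y v) = obj (star c) {c} u"
  proof (cases "w (\<Union>c) \<ge> (\<Sum>m\<in>c. max (- w m) 0)")
    case True then show ?thesis using star_case1[OF fc pc] by blast
  next
    case False
    show ?thesis
    proof (cases "\<exists>m0\<in>c. w m0 \<le> 0")
      case True
      then obtain m0 where "m0 \<in> c" "w m0 \<le> 0" by blast
      then show ?thesis using star_case2[OF fc pc] False by auto
    next
      case F2: False
      then have "\<forall>m\<in>c. w m > 0" by auto
      moreover have "(\<Sum>m\<in>c. max (- w m) 0) = 0" using calculation by (intro sum.neutral) auto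
      ultimately show ?thesis using star_case3[OF fc pc ne] False by auto
    qed
  qed
qed




lemma exists_max01:
  fixes w :: "nat set \<Rightarrow> int"
  assumes "finite V" "P y0" "\<And>y. P y \<Longrightarrow> (\<forall>x\<in>V. y x = 0 \<or> y x = 1)"
  shows "\<exists>ym. P ym \<and> (\<forall>y. P y \<longrightarrow> (\<Sum>x\<in>V. w x * y x) \<le> (\<Sum>x\<in>V. w x * ym x))"
proof -
  define S where "S = {(\<Sum>x\<in>V. w x * y x) | y. P y}"
  define B where "B = (\<Sum>x\<in>V. \<bar>w x\<bar>)"
  have "S \<subseteq> {-B..B}"
  proof
    fix s assume "s \<in> S"
    then obtain y where y: "P y" "s = (\<Sum>x\<in>V. w x * y x)" unfolding S_def by auto
    have "\<bar>s\<bar> \<le> (\<Sum>x\<in>V. \<bar>w x * y x\<bar>)" unfolding y(2) by (rule sum_abs)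
    also have "\<dots> \<le> B" unfolding B_def using assms(3)[OF y(1)]
      by (intro sum_mono) (auto simp: abs_mult)
    finally show "s \<in> {-B..B}" by auto
  qed
  then have fS: "finite S" by (rule finite_subset) simp
  have neS: "S \<noteq> {}" using assms(2) unfolding S_def by auto
  have "Max S \<in> S" using fS neS by (rule Max_in)
  then obtain ym where ym: "P ym" "Max S = (\<Sum>x\<in>V. w x * ym x)" unfolding S_def by auto
  show ?thesis
  proof (intro exI conjI allI impI)
    show "P ym" by fact
    fix y assume "P y"
    then have "(\<Sum>x\<in>V. w x * y x) \<in> S" unfolding S_def by auto
    then show "(\<Sum>x\<in>V. w x * y x) \<le> (\<Sum>x\<in>V. w x * ym x)" using fS ym(2) by (metis Max_ge)
  qed
qed

lemma rows_mem:
  "Link c m \<in> rows_of V K \<longleftrightarrow> c \<in> K \<and> m \<in> c"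
  "AndRow c \<in> rows_of V K \<longleftrightarrow> c \<in> K"
  "Upper x \<in> rows_of V K \<longleftrightarrow> x \<in> V"
  "Lower x \<in> rows_of V K \<longleftrightarrow> x \<in> V"
  unfolding rows_of_def by auto

lemma tK_cong:
  assumes "\<forall>c\<in>K. \<forall>m\<in>c. u (Link c m) = u' (Link c m)" "\<forall>c\<in>K. u (AndRow c) = u' (AndRow c)"
  shows "tK K u x = tK K u' x"
  unfolding tK_def using assms by (intro sum.cong) auto

lemma tK_out:
  assumes "wfs V K" "x \<notin> V"
  shows "tK K u x = 0"
  unfolding tK_def using assms unfolding wfs_def by (intro sum.neutral) auto

lemma tK_union:
  assumes "finite K1" "finite K2" "K1 \<inter> K2 = {}"
  shows "tK (K1 \<union> K2) u x = tK K1 u x + tK K2 u x"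
  unfolding tK_def using assms by (simp add: sum.union_disjoint)

lemma feas_cong:
  assumes "wfs V K" "feas V K y" "\<forall>x\<in>V. y x = y' x"
  shows "feas V K y'"
proof -
  have e: "\<And>c. c \<in> K \<Longrightarrow> (\<Sum>m\<in>c. y m) = (\<Sum>m\<in>c. y' m)"
    using assms unfolding wfs_def by (intro sum.cong) auto
  show ?thesis using assms e unfolding feas_def wfs_def by (smt (verit, best) subsetD)
qed

lemma feas_union:
  "feas V1 K1 y \<Longrightarrow> feas V2 K2 y \<Longrightarrow> feas (V1 \<union> V2) (K1 \<union> K2) y"
  unfolding feas_def by auto

lemma sum_split_v:
  "finite V \<Longrightarrow> v \<in> V \<Longrightarrow> (\<Sum>x\<in>V. f x) = f v + (\<Sum>x\<in>V - {v}. f x)"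
  by (simp add: sum.remove)

lemma glue:
  assumes wf1: "wfs V1 K1" and wf2: "wfs V2 K2" and iv: "V1 \<inter> V2 = {v}" and kd: "K1 \<inter> K2 = {}"
    and n1: "nice V1 K1" and n2: "nice V2 K2"
    and f0: "feas V1 K1 (\<lambda>_. 0)" and f1: "feas V1 K1 (\<lambda>_. 1)"
  shows "nice (V1 \<union> V2) (K1 \<union> K2)"
  unfolding nice_def
proof
  fix w :: "nat set \<Rightarrow> int"
  have fV1: "finite V1" "finite K1" using wf1 unfolding wfs_def by auto
  have fV2: "finite V2" "finite K2" using wf2 unfolding wfs_def by auto
  have vV1: "v \<in> V1" and vV2: "v \<in> V2" using iv by auto
  define P where "P = (\<lambda>t y. (\<forall>x\<in>V1. y x = 0 \<or> y x = 1) \<and> feas V1 K1 y \<and> y v = (t::int))"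
  have "P 0 (\<lambda>_. 0)" "P 1 (\<lambda>_. 1)" using f0 f1 unfolding P_def by auto
  obtain y0 where y0: "P 0 y0" and y0m: "\<forall>y. P 0 y \<longrightarrow> (\<Sum>x\<in>V1 - {v}. w x * y x) \<le> (\<Sum>x\<in>V1 - {v}. w x * y0 x)"
    using exists_max01[of "V1 - {v}" "P 0" "\<lambda>_. 0" w] fV1 \<open>P 0 (\<lambda>_. 0)\<close> unfolding P_def by auto
  obtain y1 where y1: "P 1 y1" and y1m: "\<forall>y. P 1 y \<longrightarrow> (\<Sum>x\<in>V1 - {v}. w x * y x) \<le> (\<Sum>x\<in>V1 - {v}. w x * y1 x)"
    using exists_max01[of "V1 - {v}" "P 1" "\<lambda>_. 1" w] fV1 \<open>P 1 (\<lambda>_. 1)\<close> unfolding P_def by auto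
  define a0 where "a0 = (\<Sum>x\<in>V1 - {v}. w x * y0 x)"
  define a1 where "a1 = (\<Sum>x\<in>V1 - {v}. w x * y1 x)"
  define \<delta> where "\<delta> = a1 - a0"
  define w1 where "w1 = w(v := - \<delta>)"
  define w2 where "w2 = w(v := w v + \<delta>)"
  have sw1: "\<And>y. (\<Sum>x\<in>V1. w1 x * y x) = - \<delta> * y v + (\<Sum>x\<in>V1 - {v}. w x * y x)"
  proof -
    fix y
    have "(\<Sum>x\<in>V1 - {v}. w1 x * y x) = (\<Sum>x\<in>V1 - {v}. w x * y x)" unfolding w1_def by (intro sum.cong) auto
    then show "(\<Sum>x\<in>V1. w1 x * y x) = - \<delta> * y v + (\<Sum>x\<in>V1 - {v}. w x * y x)"
      using sum_split_v[OF fV1(1) vV1, of "\<lambda>x. w1 x * y x"] unfolding w1_def by simp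
  qed
  obtain y' u1 where y'01: "\<forall>x\<in>V1. y' x = 0 \<or> y' x = 1" and y'f: "feas V1 K1 y'" and u1f: "dfeas V1 K1 w1 u1"
    and e1: "(\<Sum>x\<in>V1. w1 x * y' x) = obj V1 K1 u1"
    using n1 unfolding nice_def by blast
  have ob1: "obj V1 K1 u1 = a0"
  proof (rule antisym)
    have "y' v = 0 \<or> y' v = 1" using y'01 vV1 by auto
    then show "obj V1 K1 u1 \<le> a0"
    proof
      assume "y' v = 0"
      then have "P 0 y'" using y'01 y'f unfolding P_def by auto
      then show ?thesis using e1 sw1[of y'] y0m \<open>y' v = 0\<close> unfolding a0_def by auto
    next
      assume "y' v = 1"
      then have "P 1 y'" using y'01 y'f unfolding P_def by auto
      then show ?thesis using e1 sw1[of y'] y1m \<open>y' v = 1\<close> unfolding a0_def \<delta>_def a1_def by force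
    qed
    have "(\<Sum>x\<in>V1. w1 x * y0 x) \<le> obj V1 K1 u1"
      using int_weak_duality[OF wf1 _ u1f] y0 unfolding P_def by auto
    then show "a0 \<le> obj V1 K1 u1" using sw1[of y0] y0 unfolding P_def a0_def by simp
  qed
  obtain y2 u2 where y201: "\<forall>x\<in>V2. y2 x = 0 \<or> y2 x = 1" and y2f: "feas V2 K2 y2" and u2f: "dfeas V2 K2 w2 u2"
    and e2: "(\<Sum>x\<in>V2. w2 x * y2 x) = obj V2 K2 u2"
    using n2 unfolding nice_def by blast
  define t where "t = y2 v"
  define yh where "yh = (if t = 0 then y0 else y1)"
  have t01: "t = 0 \<or> t = 1" using y201 vV2 unfolding t_def by auto
  have yh: "P t yh" using y0 y1 t01 unfolding yh_def by auto
  have yhv: "(\<Sum>x\<in>V1 - {v}. w x * yh x) - \<delta> * t = a0"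
    using t01 unfolding yh_def a0_def \<delta>_def a1_def by auto
  define y where "y = (\<lambda>x. if x \<in> V1 then yh x else y2 x)"
  define u where "u = (\<lambda>r. (if r \<in> rows_of V1 K1 then u1 r else 0) + (if r \<in> rows_of V2 K2 then u2 r else 0))"
  have yV1: "\<forall>x\<in>V1. y x = yh x" unfolding y_def by auto
  have yV2: "\<forall>x\<in>V2. y x = y2 x"
  proof
    fix x assume x: "x \<in> V2"
    show "y x = y2 x"
    proof (cases "x \<in> V1")
      case True then have "x = v" using iv x by auto
      then show ?thesis using yh unfolding y_def P_def t_def by auto
    qed (simp add: y_def)
  qed
  show "\<exists>y u. (\<forall>v\<in>V1 \<union> V2. y v = 0 \<or> y v = 1) \<and> feas (V1 \<union> V2) (K1 \<union> K2) y \<and> dfeas (V1 \<union> V2) (K1 \<union> K2) w u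
      \<and> (\<Sum>v\<in>V1 \<union> V2. w v * y v) = obj (V1 \<union> V2) (K1 \<union> K2) u"
  proof (intro exI conjI)
    show "\<forall>x\<in>V1 \<union> V2. y x = 0 \<or> y x = 1" using yV1 yV2 yh y201 unfolding P_def by auto
    show "feas (V1 \<union> V2) (K1 \<union> K2) y"
    proof (rule feas_union)
      show "feas V1 K1 y" using feas_cong[OF wf1 _ ] yh yV1 unfolding P_def by metis
      show "feas V2 K2 y" using feas_cong[OF wf2 y2f] yV2 by metis
    qed
    have tK1: "\<And>x. tK K1 u x = tK K1 u1 x"
      by (rule tK_cong) (use kd in \<open>auto simp: u_def rows_mem\<close>)
    have tK2: "\<And>x. tK K2 u x = tK K2 u2 x"
      by (rule tK_cong) (use kd in \<open>auto simp: u_def rows_mem\<close>)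
    show "dfeas (V1 \<union> V2) (K1 \<union> K2) w u"
      unfolding dfeas_def
    proof (intro conjI allI ballI)
      fix r show "0 \<le> u r" using u1f u2f unfolding u_def dfeas_def by auto
    next
      fix x assume x: "x \<in> V1 \<union> V2"
      have tu: "tK (K1 \<union> K2) u x = tK K1 u1 x + tK K2 u2 x"
        using tK_union[OF fV1(2) fV2(2) kd] tK1 tK2 by simp
      have d1: "x \<in> V1 \<Longrightarrow> u1 (Upper x) - u1 (Lower x) + tK K1 u1 x = w1 x" using u1f unfolding dfeas_def by auto
      have d2: "x \<in> V2 \<Longrightarrow> u2 (Upper x) - u2 (Lower x) + tK K2 u2 x = w2 x" using u2f unfolding dfeas_def by auto
      have o1: "x \<notin> V1 \<Longrightarrow> tK K1 u1 x = 0" by (rule tK_out[OF wf1])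
      have o2: "x \<notin> V2 \<Longrightarrow> tK K2 u2 x = 0" by (rule tK_out[OF wf2])
      show "u (Upper x) - u (Lower x) + tK (K1 \<union> K2) u x = w x"
        unfolding tu
      proof (cases "x = v")
        case True
        then show "u (Upper x) - u (Lower x) + (tK K1 u1 x + tK K2 u2 x) = w x"
          using d1 d2 vV1 vV2 unfolding u_def rows_mem w1_def w2_def by simp
      next
        case False
        then have "(x \<in> V1 \<and> x \<notin> V2) \<or> (x \<notin> V1 \<and> x \<in> V2)" using x iv by auto
        then show "u (Upper x) - u (Lower x) + (tK K1 u1 x + tK K2 u2 x) = w x"
          using d1 d2 o1 o2 False unfolding u_def rows_mem w1_def w2_def by auto
      qed
    qed
    have ou: "obj (V1 \<union> V2) (K1 \<union> K2) u = obj V1 K1 u1 + obj V2 K2 u2"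
    proof -
      have "(\<Sum>x\<in>V1 \<union> V2. u (Upper x)) = (\<Sum>x\<in>V1 \<union> V2. if x \<in> V1 then u1 (Upper x) else 0)
          + (\<Sum>x\<in>V1 \<union> V2. if x \<in> V2 then u2 (Upper x) else 0)"
        unfolding u_def rows_mem by (simp add: sum.distrib)
      also have "\<dots> = (\<Sum>x\<in>V1. u1 (Upper x)) + (\<Sum>x\<in>V2. u2 (Upper x))"
      proof -
        have "(\<Sum>x\<in>V1 \<union> V2. if x \<in> V1 then u1 (Upper x) else 0) = (\<Sum>x\<in>(V1 \<union> V2) \<inter> V1. u1 (Upper x))"
          by (rule sum.inter_restrict[symmetric]) (simp add: fV1 fV2)
        moreover have "(\<Sum>x\<in>V1 \<union> V2. if x \<in> V2 then u2 (Upper x) else 0) = (\<Sum>x\<in>(V1 \<union> V2) \<inter> V2. u2 (Upper x))"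
          by (rule sum.inter_restrict[symmetric]) (simp add: fV1 fV2)
        moreover have "(V1 \<union> V2) \<inter> V1 = V1" "(V1 \<union> V2) \<inter> V2 = V2" by auto
        ultimately show ?thesis by simp
      qed
      finally have A: "(\<Sum>x\<in>V1 \<union> V2. u (Upper x)) = (\<Sum>x\<in>V1. u1 (Upper x)) + (\<Sum>x\<in>V2. u2 (Upper x))" .
      have "(\<Sum>c\<in>K1 \<union> K2. (int (card c) - 1) * u (AndRow c)) =
          (\<Sum>c\<in>K1. (int (card c) - 1) * u (AndRow c)) + (\<Sum>c\<in>K2. (int (card c) - 1) * u (AndRow c))"
        using fV1 fV2 kd by (simp add: sum.union_disjoint)
      also have "(\<Sum>c\<in>K1. (int (card c) - 1) * u (AndRow c)) = (\<Sum>c\<in>K1. (int (card c) - 1) * u1 (AndRow c))"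
        using kd by (intro sum.cong) (auto simp: u_def rows_mem)
      also have "(\<Sum>c\<in>K2. (int (card c) - 1) * u (AndRow c)) = (\<Sum>c\<in>K2. (int (card c) - 1) * u2 (AndRow c))"
        using kd by (intro sum.cong) (auto simp: u_def rows_mem)
      finally show ?thesis using A unfolding obj_def by simp
    qed
    have s12: "(\<Sum>x\<in>V1 \<union> V2. w x * y x) + w v * y v = (\<Sum>x\<in>V1. w x * y x) + (\<Sum>x\<in>V2. w x * y x)"
      using sum.union_inter[OF fV1(1) fV2(1), of "\<lambda>x. w x * y x"] iv by simp
    have s1: "(\<Sum>x\<in>V1. w x * y x) = w v * t + (\<Sum>x\<in>V1 - {v}. w x * yh x)"
    proof -
      have "(\<Sum>x\<in>V1. w x * y x) = (\<Sum>x\<in>V1. w x * yh x)" using yV1 by (intro sum.cong) auto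
      then show ?thesis using sum_split_v[OF fV1(1) vV1, of "\<lambda>x. w x * yh x"] yh unfolding P_def by simp
    qed
    have s2: "(\<Sum>x\<in>V2. w x * y x) = (\<Sum>x\<in>V2. w2 x * y2 x) - \<delta> * t"
    proof -
      have "(\<Sum>x\<in>V2. w x * y x) = (\<Sum>x\<in>V2. w x * y2 x)" using yV2 by (intro sum.cong) auto
      also have "\<dots> = w v * y2 v + (\<Sum>x\<in>V2 - {v}. w x * y2 x)" by (rule sum_split_v[OF fV2(1) vV2])
      also have "(\<Sum>x\<in>V2 - {v}. w x * y2 x) = (\<Sum>x\<in>V2 - {v}. w2 x * y2 x)" unfolding w2_def by (intro sum.cong) auto
      also have "(\<Sum>x\<in>V2. w2 x * y2 x) = w2 v * y2 v + (\<Sum>x\<in>V2 - {v}. w2 x * y2 x)" by (rule sum_split_v[OF fV2(1) vV2])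
      ultimately show ?thesis unfolding w2_def t_def by (simp add: algebra_simps)
    qed
    have yv: "y v = t" using yV1 yh vV1 unfolding P_def by auto
    show "(\<Sum>x\<in>V1 \<union> V2. w x * y x) = obj (V1 \<union> V2) (K1 \<union> K2) u"
      unfolding ou ob1 e2[symmetric] using s12 s1 s2 yhv yv by (simp add: algebra_simps)
  qed
qed




definition sfacts :: "nat set set \<Rightarrow> nat set set set \<Rightarrow> bool" where
  "sfacts M C \<longleftrightarrow> finite M \<and> finite C \<and>
     (\<forall>c\<in>C. finite c \<and> c \<subseteq> M \<and> \<Union>c \<in> M \<and> c \<noteq> {} \<and> \<Union>c \<notin> c \<and> (\<forall>m\<in>c. card m < card (\<Union>c))) \<and>
     (\<forall>c1\<in>C. \<forall>c2\<in>C. \<Union>c1 = \<Union>c2 \<longrightarrow> c1 = c2)"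

lemma simple_sfacts:
  assumes "simple_linearization n M C"
  shows "sfacts M C"
proof -
  have lin: "linearization n M C" and uq: "\<forall>m\<in>proper_monomials n M. \<exists>!c. c \<in> C \<and> \<Union>c = m"
    and cd: "card C = card (proper_monomials n M)"
    using assms unfolding simple_linearization_def by auto
  have mon: "\<forall>m\<in>M. monomial n m" and cM: "\<forall>c\<in>C. c \<subseteq> M \<and> \<Union>c \<in> M"
    and cons: "\<forall>m\<in>proper_monomials n M. \<exists>c\<in>C. \<Union>c = m \<and> (\<forall>m'\<in>c. card m' < card m)"
    using lin unfolding linearization_def by auto
  have "M \<subseteq> Pow {1..n}" using mon unfolding monomial_def by auto
  then have fM: "finite M" by (rule finite_subset) simp
  have "C \<subseteq> Pow M" using cM by auto
  then have fC: "finite C" by (rule finite_subset) (simp add: fM)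
  define P where "P = proper_monomials n M"
  define C' where "C' = {c\<in>C. \<Union>c \<in> P}"
  have uq': "c1 = c2" if "c1 \<in> C" "c2 \<in> C" "\<Union>c1 \<in> P" "\<Union>c1 = \<Union>c2" for c1 c2
  proof -
    have "\<exists>!c. c \<in> C \<and> \<Union>c = \<Union>c1" using uq that(3) unfolding P_def by (rule bspec)
    then show ?thesis using that by (metis (no_types, lifting))
  qed
  have inj: "inj_on Union C'" unfolding inj_on_def C'_def using uq' by auto
  have im: "Union ` C' = P"
  proof
    show "Union ` C' \<subseteq> P" unfolding C'_def by auto
    show "P \<subseteq> Union ` C'"
    proof
      fix m assume "m \<in> P"
      have "\<exists>c\<in>C. \<Union>c = m \<and> (\<forall>m'\<in>c. card m' < card m)" using cons \<open>m \<in> P\<close> unfolding P_def by (rule bspec)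
      then obtain c where c: "c \<in> C" "\<Union>c = m" by auto
      then have "c \<in> C'" unfolding C'_def using \<open>m \<in> P\<close> by simp
      then show "m \<in> Union ` C'" using c(2) by (metis imageI)
    qed
  qed
  have "card (Union ` C') = card C'" by (rule card_image[OF inj])
  then have "card C' = card P" unfolding im by simp
  then have c1: "card C' = card C" using cd unfolding P_def by simp
  have c2: "C' \<subseteq> C" unfolding C'_def by auto
  have CC: "C' = C" by (rule card_subset_eq[OF fC c2 c1])
  have inP: "\<And>c. c \<in> C \<Longrightarrow> \<Union>c \<in> P" using CC unfolding C'_def by auto
  have small: "\<And>c m. c \<in> C \<Longrightarrow> m \<in> c \<Longrightarrow> card m < card (\<Union>c)"
  proof -
    fix c m assume c: "c \<in> C" and m: "m \<in> c"
    have "\<exists>c'\<in>C. \<Union>c' = \<Union>c \<and> (\<forall>m'\<in>c'. card m' < card (\<Union>c))"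
      using cons inP[OF c] unfolding P_def by (rule bspec)
    then obtain c' where c': "c' \<in> C" "\<Union>c' = \<Union>c" "\<forall>m'\<in>c'. card m' < card (\<Union>c)"
      by auto
    have "c' = c" using uq'[OF c'(1) c] inP[OF c] c' by simp
    then show "card m < card (\<Union>c)" using c' m by auto
  qed
  show ?thesis unfolding sfacts_def
  proof (intro conjI ballI impI)
    show "finite M" "finite C" by fact+
    fix c assume c: "c \<in> C"
    show "c \<subseteq> M" "\<Union>c \<in> M" using cM c by auto
    show "finite c" using c cM fM by (meson finite_subset)
    show "c \<noteq> {}"
    proof
      assume "c = {}"
      then have "{} \<in> M" using cM c by auto
      then show False using mon unfolding monomial_def by auto
    qed
    show "\<Union>c \<notin> c" using small[OF c] by auto
    fix m assume "m \<in> c" then show "card m < card (\<Union>c)" using small[OF c] by auto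
  next
    fix c1 c2 assume "c1 \<in> C" "c2 \<in> C" "\<Union>c1 = \<Union>c2"
    then show "c1 = c2" using uq' inP by metis
  qed
qed

definition adj :: "nat set set set \<Rightarrow> nat set \<Rightarrow> nat set \<Rightarrow> bool" where
  "adj K x y \<longleftrightarrow> (\<exists>c\<in>K. (x = \<Union>c \<and> y \<in> c) \<or> (y = \<Union>c \<and> x \<in> c))"

definition path :: "nat set set set \<Rightarrow> nat set list \<Rightarrow> bool" where
  "path K xs \<longleftrightarrow> distinct xs \<and> (\<forall>i. Suc i < length xs \<longrightarrow> adj K (xs ! i) (xs ! Suc i))"

lemma adj_sym: "adj K x y \<Longrightarrow> adj K y x" unfolding adj_def by blast

lemma adj_edge: "K \<subseteq> C \<Longrightarrow> adj K x y \<Longrightarrow> {x, y} \<in> G_edges C"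
proof -
  assume K: "K \<subseteq> C" and a: "adj K x y"
  then obtain c where c: "c \<in> C" "(x = \<Union>c \<and> y \<in> c) \<or> (y = \<Union>c \<and> x \<in> c)" unfolding adj_def by blast
  from c(2) show "{x, y} \<in> G_edges C"
  proof
    assume h: "x = \<Union>c \<and> y \<in> c"
    then have "(x, y) \<in> D_arcs C" using c(1) unfolding D_arcs_def by blast
    then show ?thesis unfolding G_edges_def by blast
  next
    assume h: "y = \<Union>c \<and> x \<in> c"
    then have "(y, x) \<in> D_arcs C" using c(1) unfolding D_arcs_def by blast
    then have "{y, x} \<in> G_edges C" unfolding G_edges_def by blast
    then show ?thesis by (simp add: insert_commute)
  qed
qed

lemma adj_M: "sfacts M C \<Longrightarrow> K \<subseteq> C \<Longrightarrow> adj K x y \<Longrightarrow> x \<in> M \<and> y \<in> M \<and> x \<noteq> y"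
proof -
  assume s: "sfacts M C" and K: "K \<subseteq> C" and a: "adj K x y"
  then obtain c where c: "c \<in> C" "(x = \<Union>c \<and> y \<in> c) \<or> (y = \<Union>c \<and> x \<in> c)" unfolding adj_def by auto
  have "c \<subseteq> M" "\<Union>c \<in> M" "\<Union>c \<notin> c" using s c(1) unfolding sfacts_def by auto
  then show ?thesis using c(2) by auto
qed

lemma cycle_from_path:
  assumes "K \<subseteq> C" "path K xs" "length xs \<ge> 3" "adj K (last xs) (hd xs)" "set xs \<subseteq> M"
  shows "is_cycle M (G_edges C) xs"
  unfolding is_cycle_def
proof (intro conjI allI impI)
  show "3 \<le> length xs" "distinct xs" "set xs \<subseteq> M" using assms unfolding path_def by auto
  fix i assume i: "i < length xs"
  show "{xs ! i, xs ! ((i + 1) mod length xs)} \<in> G_edges C"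
  proof (cases "Suc i < length xs")
    case True
    then show ?thesis using assms(2) adj_edge[OF assms(1)] unfolding path_def by simp
  next
    case False
    then have "i = length xs - 1" using i by auto
    moreover have "xs \<noteq> []" using assms(3) by auto
    ultimately have "xs ! i = last xs" "(i + 1) mod length xs = 0" using i by (auto simp: last_conv_nth)
    moreover have "xs ! 0 = hd xs" using \<open>xs \<noteq> []\<close> by (simp add: hd_conv_nth)
    ultimately show ?thesis using adj_edge[OF assms(1) assms(4)] by simp
  qed
qed

lemma path_take: "path K xs \<Longrightarrow> path K (take n xs)"
  unfolding path_def by auto

lemma path_drop: "path K xs \<Longrightarrow> path K (drop n xs)"
  unfolding path_def by auto

lemma path_Cons: "path K xs \<Longrightarrow> y \<notin> set xs \<Longrightarrow> xs \<noteq> [] \<Longrightarrow> adj K y (hd xs) \<Longrightarrow> path K (y # xs)"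
  unfolding path_def
  apply (auto simp: hd_conv_nth)
  subgoal for i by (cases i) (auto simp: hd_conv_nth)
  done

lemma last_take_nth: "j < length xs \<Longrightarrow> last (take (Suc j) xs) = xs ! j"
proof -
  assume j: "j < length xs"
  then have "take (Suc j) xs \<noteq> []" "length (take (Suc j) xs) = Suc j" by auto
  then show ?thesis using j by (simp add: last_conv_nth)
qed

lemma sfactsD:
  assumes "sfacts M C" "c \<in> C"
  shows "finite c" "c \<subseteq> M" "\<Union>c \<in> M" "c \<noteq> {}" "\<Union>c \<notin> c" "\<And>m. m \<in> c \<Longrightarrow> card m < card (\<Union>c)"
  using assms unfolding sfacts_def by auto

lemma sfacts_inj: "sfacts M C \<Longrightarrow> c1 \<in> C \<Longrightarrow> c2 \<in> C \<Longrightarrow> \<Union>c1 = \<Union>c2 \<Longrightarrow> c1 = c2"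
  unfolding sfacts_def by metis

lemma other_member:
  assumes "sfacts M C" "c \<in> C"
  shows "\<exists>m\<in>c. m \<noteq> x"
proof (rule ccontr)
  assume "\<not> (\<exists>m\<in>c. m \<noteq> x)"
  then have all: "\<forall>m\<in>c. m = x" by simp
  have "c \<noteq> {}" using sfactsD[OF assms] by simp
  then have "c = {x}" using all by auto
  then have "\<Union>c \<in> c" by simp
  then show False using sfactsD(5)[OF assms] by simp
qed

lemma adjc: "c \<in> K \<Longrightarrow> m \<in> c \<Longrightarrow> adj K (\<Union>c) m"
  unfolding adj_def by (intro bexI[of _ c]) simp_all




lemma leaf_star:
  assumes sf: "sfacts M C" and ac: "acyclic_graph M (G_edges C)" and KC: "K \<subseteq> C" and Kne: "K \<noteq> {}"
  shows "\<exists>c\<in>K. \<exists>v\<in>star c. \<forall>d\<in>K - {c}. star c \<inter> star d \<subseteq> {v}"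
proof -
  have nocyc: "False" if "path K zs" "length zs \<ge> 3" "adj K (last zs) (hd zs)" "set zs \<subseteq> M" for zs
    using cycle_from_path[OF KC that] ac unfolding acyclic_graph_def by blast
  have adjM: "\<And>x y. adj K x y \<Longrightarrow> x \<in> M \<and> y \<in> M \<and> x \<noteq> y" using adj_M[OF sf KC] by blast
  have KC': "\<And>c. c \<in> K \<Longrightarrow> c \<in> C" using KC by auto
  define PS where "PS = {xs. path K xs \<and> set xs \<subseteq> M \<and> 2 \<le> length xs}"
  have fM: "finite M" using sf unfolding sfacts_def by simp
  have fPS: "finite PS"
    by (rule finite_subset[OF _ finite_subset_distinct[OF fM]]) (auto simp: PS_def path_def)
  obtain c0 where c0: "c0 \<in> K" using Kne by auto
  obtain m0 where m0: "m0 \<in> c0" using sfactsD(4)[OF sf KC'[OF c0]] by auto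
  have "[m0, \<Union>c0] \<in> PS"
  proof -
    have a: "adj K m0 (\<Union>c0)" using adj_sym[OF adjc[OF c0 m0]] .
    then have "m0 \<in> M" "\<Union>c0 \<in> M" "m0 \<noteq> \<Union>c0" using adjM by auto
    moreover have "path K [m0, \<Union>c0]" unfolding path_def using a \<open>m0 \<noteq> \<Union>c0\<close>
      by (auto simp: less_Suc_eq)
    ultimately show ?thesis unfolding PS_def by simp
  qed
  then have neP: "PS \<noteq> {}" by auto
  have "Max (length ` PS) \<in> length ` PS" using fPS neP by (intro Max_in) auto
  then obtain xs where xsP: "xs \<in> PS" and xsL: "length xs = Max (length ` PS)" by auto
  have maxl: "\<And>ys. ys \<in> PS \<Longrightarrow> length ys \<le> length xs" unfolding xsL using fPS by simp
  have pxs: "path K xs" and sxs: "set xs \<subseteq> M" and lxs: "2 \<le> length xs" using xsP unfolding PS_def by auto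
  then obtain x0 x1 rest where xs: "xs = x0 # x1 # rest"
    by (metis Suc_le_length_iff numeral_2_eq_2)
  have dxs: "distinct xs" using pxs unfolding path_def by simp
  have pidx: "\<And>i. Suc i < length xs \<Longrightarrow> adj K (xs ! i) (xs ! Suc i)" using pxs unfolding path_def by simp
  have a01: "adj K x0 x1" using pidx[of 0] unfolding xs by simp
  have A: "y = x1" if ay: "adj K x0 y" for y
  proof (rule ccontr)
    assume yne: "y \<noteq> x1"
    have yM: "y \<in> M" and yx0: "y \<noteq> x0" using adjM[OF ay] by auto
    show False
    proof (cases "y \<in> set xs")
      case False
      have "path K (y # xs)" by (rule path_Cons[OF pxs False]) (use adj_sym[OF ay] xs in auto)
      then have "y # xs \<in> PS" using sxs yM lxs unfolding PS_def by auto
      then show False using maxl by fastforce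
    next
      case True
      then obtain j where j: "j < length xs" "xs ! j = y" by (auto simp: in_set_conv_nth)
      have "j \<noteq> 0" "j \<noteq> 1" using j yne yx0 unfolding xs by auto
      then have j2: "j \<ge> 2" by auto
      let ?zs = "take (Suc j) xs"
      show False
      proof (rule nocyc[of ?zs])
        show "path K ?zs" by (rule path_take[OF pxs])
        show "3 \<le> length ?zs" using j j2 by auto
        show "adj K (last ?zs) (hd ?zs)" using last_take_nth[OF j(1)] j adj_sym[OF ay] unfolding xs by simp
        show "set ?zs \<subseteq> M" using sxs set_take_subset by fastforce
      qed
    qed
  qed
  obtain c where cK: "c \<in> K" and x1c: "x1 = \<Union>c" and x0c: "x0 \<in> c"
  proof -
    obtain c where cK: "c \<in> K" and h: "(x0 = \<Union>c \<and> x1 \<in> c) \<or> (x1 = \<Union>c \<and> x0 \<in> c)"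
      using a01 unfolding adj_def by blast
    show ?thesis
    proof (cases "x0 = \<Union>c \<and> x1 \<in> c")
      case True
      obtain m where m: "m \<in> c" "m \<noteq> x1" using other_member[OF sf KC'[OF cK]] by blast
      have "adj K x0 m" using adjc[OF cK m(1)] True by simp
      then show ?thesis using A m(2) by blast
    next
      case False
      then show ?thesis using h cK that by blast
    qed
  qed
  have Cl: "z = x1" if ay: "adj K x1 y" and yh: "rest = [] \<or> y \<noteq> hd rest" and az: "adj K y z" for y z
  proof (rule ccontr)
    assume zne: "z \<noteq> x1"
    have yx1: "y \<noteq> x1" and yM: "y \<in> M" using adjM[OF ay] by auto
    have zy: "z \<noteq> y" and zM: "z \<in> M" using adjM[OF az] by auto
    show False
    proof (cases "y = x0")
      case True
      then show False using A[of z] az zne by simp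
    next
      case yx0: False
      show False
      proof (cases "y \<in> set xs")
        case True
        then obtain j where j: "j < length xs" "xs ! j = y" by (auto simp: in_set_conv_nth)
        have "j \<noteq> 0" "j \<noteq> 1" using j yx0 yx1 unfolding xs by auto
        moreover have "j \<noteq> 2"
        proof
          assume "j = 2"
          then have "rest \<noteq> []" "y = hd rest" using j unfolding xs by (auto simp: hd_conv_nth)
          then show False using yh by simp
        qed
        ultimately have j3: "j \<ge> 3" by auto
        let ?zs = "drop 1 (take (Suc j) xs)"
        show False
        proof (rule nocyc[of ?zs])
          show "path K ?zs" by (rule path_drop[OF path_take[OF pxs]])
          show "3 \<le> length ?zs" using j j3 by auto
          have "hd ?zs = x1" using j3 unfolding xs by (cases j) auto
          moreover have "last ?zs = y"
          proof -
            have "last ?zs = last (take (Suc j) xs)" using j3 j by (simp add: last_drop)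
            then show ?thesis using last_take_nth[OF j(1)] j(2) by simp
          qed
          ultimately show "adj K (last ?zs) (hd ?zs)" using adj_sym[OF ay] by simp
          show "set ?zs \<subseteq> M" using sxs by (meson order_trans set_drop_subset set_take_subset)
        qed
      next
        case yout: False
        show False
        proof (cases "z \<in> set xs")
          case True
          then obtain j where j: "j < length xs" "xs ! j = z" by (auto simp: in_set_conv_nth)
          have "j \<noteq> 0"
          proof
            assume "j = 0"
            then have "z = x0" using j unfolding xs by simp
            then have "y = x1" using A adj_sym[OF az] by simp
            then show False using yx1 by simp
          qed
          moreover have "j \<noteq> 1" using j zne unfolding xs by auto
          ultimately have j2: "j \<ge> 2" by auto
          let ?ws = "drop 1 (take (Suc j) xs)"
          have pws: "path K ?ws" by (rule path_drop[OF path_take[OF pxs]])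
          have hws: "hd ?ws = x1" using j2 unfolding xs by (cases j) auto
          have nws: "?ws \<noteq> []" using j j2 by auto
          have lws: "last ?ws = z"
          proof -
            have "last ?ws = last (take (Suc j) xs)" using j2 j by (simp add: last_drop)
            then show ?thesis using last_take_nth[OF j(1)] j(2) by simp
          qed
          have yws: "y \<notin> set ?ws" using yout by (meson in_set_dropD in_set_takeD)
          let ?zs = "y # ?ws"
          show False
          proof (rule nocyc[of ?zs])
            show "path K ?zs" by (rule path_Cons[OF pws yws nws]) (use hws adj_sym[OF ay] in simp)
            show "3 \<le> length ?zs" using j j2 by auto
            show "adj K (last ?zs) (hd ?zs)" using lws nws adj_sym[OF az] by simp
            show "set ?zs \<subseteq> M" using sxs yM by (auto dest: in_set_dropD in_set_takeD)
          qed
        next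
          case zout: False
          have p1: "path K (y # x1 # rest)"
            by (rule path_Cons) (use path_drop[OF pxs, of 1] yout adj_sym[OF ay] xs in auto)
          have p2: "path K (z # y # x1 # rest)"
            by (rule path_Cons[OF p1]) (use zout zy adj_sym[OF az] xs in auto)
          have "z # y # x1 # rest \<in> PS" using p2 sxs yM zM unfolding PS_def xs by auto
          then show False using maxl unfolding xs by fastforce
        qed
      qed
    qed
  qed
  define v where "v = (if rest \<noteq> [] \<and> hd rest \<in> c then hd rest else x1)"
  have vs: "v \<in> star c" unfolding v_def star_def using x1c by auto
  have D: "a = v" if dK: "d \<in> K" and dc: "d \<noteq> c" and a1: "a \<in> star c" and a2: "a \<in> star d" for d a
  proof -
    have dC: "d \<in> C" using KC' dK by simp
    have ud: "\<Union>d \<noteq> \<Union>c" using sfacts_inj[OF sf dC KC'[OF cK]] dc by auto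
    have centre_bad: False if q: "adj K x1 q" "rest = [] \<or> q \<noteq> hd rest" "q = \<Union>d" for q
    proof -
      obtain m where m: "m \<in> d" "m \<noteq> x1" using other_member[OF sf dC] by blast
      have "adj K q m" using adjc[OF dK m(1)] q(3) by simp
      then show False using Cl[OF q(1,2)] m(2) by simp
    qed
    show "a = v"
    proof (cases "a = x1")
      case True
      show ?thesis
      proof (cases "rest \<noteq> [] \<and> hd rest \<in> c")
        case False
        then have "v = x1" unfolding v_def by auto
        then show ?thesis using True by simp
      next
        case hc: True
        have "a \<in> d" using a2 True x1c ud unfolding star_def by auto
        then have aq: "adj K x1 (\<Union>d)" using adj_sym[OF adjc[OF dK]] True by simp
        have "\<Union>d \<noteq> hd rest"
        proof
          assume e: "\<Union>d = hd rest"
          have "card (hd rest) < card x1" using sfactsD(6)[OF sf KC'[OF cK]] hc x1c by simp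
          moreover have "card x1 < card (\<Union>d)" using sfactsD(6)[OF sf dC] \<open>a \<in> d\<close> True by simp
          ultimately show False using e by simp
        qed
        then show ?thesis using centre_bad[OF aq] by simp
      qed
    next
      case False
      then have ac: "a \<in> c" using a1 x1c unfolding star_def by auto
      have aa: "adj K x1 a" using adjc[OF cK ac] x1c by simp
      show ?thesis
      proof (cases "rest \<noteq> [] \<and> a = hd rest")
        case True
        then show ?thesis using ac unfolding v_def by simp
      next
        case nh: False
        then have nh': "rest = [] \<or> a \<noteq> hd rest" by simp
        show ?thesis
        proof (cases "a = \<Union>d")
          case True
          then show ?thesis using centre_bad[OF aa nh'] by simp
        next
          case False
          then have "a \<in> d" using a2 unfolding star_def by auto
          then have "adj K a (\<Union>d)" using adj_sym[OF adjc[OF dK]] by simp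
          then have "\<Union>d = x1" using Cl[OF aa nh'] by simp
          then show ?thesis using ud x1c by simp
        qed
      qed
    qed
  qed
  show ?thesis
  proof (intro bexI[OF _ cK] bexI[OF _ vs] ballI subsetI)
    fix d a assume "d \<in> K - {c}" "a \<in> star c \<inter> star d"
    then show "a \<in> {v}" using D by auto
  qed
qed




lemma main_nice:
  assumes sf: "sfacts M C" and ac: "acyclic_graph M (G_edges C)"
  shows "K \<subseteq> C \<Longrightarrow> finite V \<Longrightarrow> (\<forall>c\<in>K. star c \<subseteq> V) \<Longrightarrow> nice V K"
proof (induction "card K" arbitrary: K V rule: less_induct)
  case less
  have fC: "finite C" using sf unfolding sfacts_def by simp
  have fK: "finite K" using less.prems(1) fC finite_subset by auto
  show ?case
  proof (cases "K = {}")
    case True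
    then show ?thesis using base_nice[OF less.prems(2)] by simp
  next
    case False
    obtain c v where cK: "c \<in> K" and vs: "v \<in> star c" and lf: "\<forall>d\<in>K - {c}. star c \<inter> star d \<subseteq> {v}"
      using leaf_star[OF sf ac less.prems(1) False] by blast
    have cC: "c \<in> C" using cK less.prems(1) by auto
    define K' where "K' = K - {c}"
    define V' where "V' = V - (star c - {v})"
    have cV: "star c \<subseteq> V" using less.prems(3) cK by auto
    have lt: "card K' < card K" unfolding K'_def using fK cK by (meson card_Diff1_less)
    have sd: "\<forall>d\<in>K'. star d \<subseteq> V'"
    proof
      fix d assume d: "d \<in> K'"
      have "star d \<subseteq> V" using less.prems(3) d unfolding K'_def by auto
      moreover have "star c \<inter> star d \<subseteq> {v}" using lf d unfolding K'_def by auto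
      ultimately show "star d \<subseteq> V'" unfolding V'_def by auto
    qed
    have nV': "nice V' K'"
      by (rule less.hyps[OF lt]) (use less.prems sd in \<open>auto simp: K'_def V'_def\<close>)
    have fc: "finite c" "c \<noteq> {}" "\<Union>c \<notin> c" using sfactsD[OF sf cC] by auto
    have w1: "wfs (star c) {c}" unfolding wfs_def star_def using fc by auto
    have w2: "wfs V' K'" unfolding wfs_def
    proof (intro conjI ballI)
      show "finite V'" using less.prems(2) unfolding V'_def by simp
      show "finite K'" using fK unfolding K'_def by simp
      fix d assume d: "d \<in> K'"
      then have dC: "d \<in> C" using less.prems(1) unfolding K'_def by auto
      show "finite d" using sfactsD(1)[OF sf dC] .
      show "d \<subseteq> V'" "\<Union>d \<in> V'" using sd d unfolding star_def by auto
    qed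
    have iv: "star c \<inter> V' = {v}" using vs cV unfolding V'_def by auto
    have kd: "{c} \<inter> K' = {}" unfolding K'_def by auto
    have c1: "card c \<ge> 1" using fc by (simp add: Suc_le_eq card_gt_0_iff)
    have f0: "feas (star c) {c} (\<lambda>_. 0)" unfolding feas_def using c1 by simp
    have f1: "feas (star c) {c} (\<lambda>_. 1)" unfolding feas_def by simp
    have "nice (star c \<union> V') ({c} \<union> K')"
      by (rule glue[OF w1 w2 iv kd star_nice[OF fc(1) fc(3) fc(2)] nV' f0 f1])
    moreover have "star c \<union> V' = V" using cV unfolding V'_def by auto
    moreover have "{c} \<union> K' = K" using cK unfolding K'_def by auto
    ultimately show ?thesis by simp
  qed
qed

theorem lemma3p10:
  fixes n :: nat and M :: "nat set set" and C :: "nat set set set"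
  assumes "simple_linearization n M C"
    and "acyclic_graph M (G_edges C)"
  shows "TDI (lin_rows M C) M lin_A lin_b"
proof -
  have sf: "sfacts M C" by (rule simple_sfacts[OF assms(1)])
  have fM: "finite M" using sf unfolding sfacts_def by simp
  have sc: "\<forall>c\<in>C. star c \<subseteq> M" using sf unfolding sfacts_def star_def by auto
  have nM: "nice M C" by (rule main_nice[OF sf assms(2) subset_refl fM sc])
  have w: "wfs M C" using sf unfolding sfacts_def wfs_def by auto
  have "lin_rows M C = rows_of M C" unfolding lin_rows_def rows_of_def by simp
  then show ?thesis using nice_TDI[OF w nM] by simp
qed


end
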